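(* Let $\mathcal{M}=(\mathcal{V}',\mathcal{E}')$ be a finite graph with shortest-path distance $d_{\mathcal{M}}$, and let $d,\ell\ge1$ be integers. Let $A_1,\dots,A_\ell\in\mathbb{R}^{|\mathcal{V}'|d\times|\mathcal{V}'|d}$ be block matrices with $d\times d$ blocks $(A_i)_{u,q}$ indexed by $u,q\in\mathcal{V}'$, and suppose there exist $C_i\ge0$ and $0\le\lambda<1$ such that $\|(A_i)_{u,q}\|\le C_i\lambda^{d_{\mathcal{M}}(u,q)}$ for all $u,q\in\mathcal{V}'$ and all $i$. Choose $\delta>0$ with $\lambda'=\lambda+\delta<1$, and suppose \[ \tilde a:=\sum_{k=0}^\infty\Big(\frac{\lambda}{\lambda'}\Big)^k\sup_{u\in\mathcal{V}'}|\partial N_u^k|<\infty. \] Then for all $u,v\in\mathcal{V}'$, \[ \Big\|\Big(\prod_{i=1}^\ell A_i\Big)_{u,v}\Big\|\le C'(\lambda')^{d_{\mathcal{M}}(u,v)},\qquad C'=\tilde a^{\,\ell}\prod_{i=1}^\ell C_i. \]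
   Context: $\|\cdot\|$ is the induced 2-norm on matrices. $N_u^k=\{q\in\mathcal{V}':d_{\mathcal{M}}(u,q)\le k\}$ and $\partial N_u^k=N_u^k\setminus N_u^{k-1}$ (with $N_u^{-1}=\emptyset$). *)

theory Defs
  imports "HOL-Analysis.Analysis" "HOL-Library.Extended_Nat"
begin

definition gdist :: "('v \<Rightarrow> 'v \<Rightarrow> bool) \<Rightarrow> 'v \<Rightarrow> 'v \<Rightarrow> enat" where
  "gdist E u v = (if \<exists>n. (E ^^ n) u v then enat (LEAST n. (E ^^ n) u v) else \<infinity>)"

text \<open>lambda to the power of an extended natural; lambda^infinity = 0 (limit for 0 <= lambda < 1).\<close>
definition epow :: "real \<Rightarrow> enat \<Rightarrow> real" where
  "epow x k = (case k of enat n \<Rightarrow> x ^ n | \<infinity> \<Rightarrow> 0)"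

definition gball :: "('v \<Rightarrow> 'v \<Rightarrow> bool) \<Rightarrow> 'v \<Rightarrow> nat \<Rightarrow> 'v set" where
  "gball E u k = {q. gdist E u q \<le> enat k}"

text \<open>boundary of N_u^k, with N_u^{-1} empty\<close>
definition gsphere :: "('v \<Rightarrow> 'v \<Rightarrow> bool) \<Rightarrow> 'v \<Rightarrow> nat \<Rightarrow> 'v set" where
  "gsphere E u k = gball E u k - (if k = 0 then {} else gball E u (k - 1))"

definition blk :: "real ^ ('v::finite \<times> 'd::finite) ^ ('v \<times> 'd) \<Rightarrow> 'v \<Rightarrow> 'v \<Rightarrow> real ^ 'd ^ 'd" where
  "blk A u q = (\<chi> i j. A $ (u, i) $ (q, j))"

definition mnorm2 :: "real ^ 'd ^ 'd \<Rightarrow> real" where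
  "mnorm2 B = onorm (\<lambda>x. B *v x)"

end

theory Submission imports Defs begin

lemma mnorm2_nonneg: "mnorm2 B \<ge> 0"
  unfolding mnorm2_def by (rule onorm_pos_le) simp

lemma mnorm2_mult: "mnorm2 (X ** Y) \<le> mnorm2 X * mnorm2 Y"
proof -
  have "(\<lambda>x. (X ** Y) *v x) = (\<lambda>x. X *v x) \<circ> (\<lambda>x. Y *v x)"
    by (auto simp: matrix_vector_mul_assoc)
  then show ?thesis unfolding mnorm2_def
    by (metis onorm_compose matrix_vector_mul_bounded_linear)
qed

lemma mnorm2_add: "mnorm2 (X + Y) \<le> mnorm2 X + mnorm2 Y"
proof -
  have e: "(\<lambda>x. (X + Y) *v x) = (\<lambda>x. X *v x + Y *v x)"
    by (simp add: matrix_vector_mult_add_rdistrib)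
  show ?thesis unfolding mnorm2_def e
    using onorm_triangle[of "\<lambda>x. X *v x" "\<lambda>x. Y *v x"] by simp
qed

lemma mnorm2_zero: "mnorm2 0 = 0"
  proof -
  have e: "(\<lambda>x. (0::real^'a^'b) *v x) = (\<lambda>x. 0)" by simp
  show ?thesis unfolding mnorm2_def e by (rule onorm_zero)
qed

lemma mnorm2_sum: "finite S \<Longrightarrow> mnorm2 (\<Sum>q\<in>S. f q) \<le> (\<Sum>q\<in>S. mnorm2 (f q))"
proof (induction S rule: finite_induct)
  case empty then show ?case by (simp add: mnorm2_zero)
next
  case (insert x F)
  then show ?case using mnorm2_add[of "f x" "sum f F"] by simp
qed

lemma mnorm2_id: "mnorm2 (mat 1) \<le> 1"
  proof -
  have e: "(\<lambda>x. (mat 1::real^'a^'a) *v x) = (\<lambda>x. x)" by simp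
  show ?thesis unfolding mnorm2_def e by (rule onorm_id_le)
qed

lemma blk_mult: "blk (A ** B) u v = (\<Sum>q\<in>UNIV. blk A u q ** blk B q v)"
proof -
  have "(A ** B) $ (u,i) $ (v,j) = (\<Sum>q\<in>UNIV. \<Sum>k\<in>UNIV. A $ (u,i) $ (q,k) * B $ (q,k) $ (v,j))" for i j
    unfolding matrix_matrix_mult_def
    by (simp add: sum.cartesian_product UNIV_Times_UNIV[symmetric] del: UNIV_Times_UNIV)
  then show ?thesis
    by (simp add: vec_eq_iff blk_def matrix_matrix_mult_def)
qed

lemma blk_id: "blk (mat 1) u v = (if u = v then mat 1 else 0)"
  by (auto simp: blk_def vec_eq_iff mat_def)


lemma gdist_refl: "gdist E u u = 0"
proof -
  have ex: "\<exists>n. (E ^^ n) u u" by (rule exI[of _ 0]) simp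
  have "(E ^^ 0) u u" by simp
  then have "(LEAST n. (E ^^ n) u u) = 0" by (metis (mono_tags, lifting) Least_eq_0)
  then show ?thesis unfolding gdist_def using ex by (simp add: enat_0)
qed

lemma gdist_tri: "gdist E u v \<le> gdist E u q + gdist E q v"
proof (cases "gdist E u q = \<infinity> \<or> gdist E q v = \<infinity>")
  case True then show ?thesis by auto
next
  case False
  have ex1: "\<exists>n. (E ^^ n) u q" using False by (auto simp: gdist_def split: if_splits)
  have ex2: "\<exists>n. (E ^^ n) q v" using False by (auto simp: gdist_def split: if_splits)
  define m where "m = (LEAST n. (E ^^ n) u q)"
  define n where "n = (LEAST k. (E ^^ k) q v)"
  have m: "(E ^^ m) u q" unfolding m_def by (rule LeastI_ex[OF ex1])
  have n: "(E ^^ n) q v" unfolding n_def by (rule LeastI_ex[OF ex2])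
  have dm: "gdist E u q = enat m" using ex1 by (simp add: gdist_def m_def)
  have dn: "gdist E q v = enat n" using ex2 by (simp add: gdist_def n_def)
  have "(E ^^ (m + n)) u v" using m n by (auto simp: relpowp_add)
  then have "(LEAST k. (E ^^ k) u v) \<le> m + n" by (rule Least_le)
  then show ?thesis using \<open>(E ^^ (m + n)) u v\<close> dm dn unfolding gdist_def by auto
qed

lemma epow_zero: "epow x 0 = 1"
  unfolding epow_def zero_enat_def by (simp only: enat.case power_0)

lemma epow_nonneg: "0 \<le> x \<Longrightarrow> 0 \<le> epow x d"
  by (cases d) (auto simp: epow_def)

lemma epow_le1: "0 \<le> x \<Longrightarrow> x \<le> 1 \<Longrightarrow> epow x d \<le> 1"
  by (cases d) (auto simp: epow_def power_le_one)

lemma epow_anti: "0 \<le> x \<Longrightarrow> x \<le> 1 \<Longrightarrow> a \<le> b \<Longrightarrow> epow x b \<le> epow x a"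
  by (cases a; cases b) (auto simp: epow_def power_decreasing)

lemma epow_add: "epow x (a + b) = epow x a * epow x b"
  by (cases a; cases b) (auto simp: epow_def power_add)

lemma epow_mult: "epow (x * y) d = epow x d * epow y d"
  by (cases d) (auto simp: epow_def power_mult_distrib)

lemma gsphere_eq: "gsphere E u k = {q. gdist E u q = enat k}"
proof (cases k)
  case 0 then show ?thesis by (auto simp: gsphere_def gball_def zero_enat_def[symmetric])
next
  case (Suc j)
  have "(x \<le> enat (Suc j) \<and> \<not> x \<le> enat j) = (x = enat (Suc j))" for x
    by (cases x) auto
  then show ?thesis using Suc by (auto simp: gsphere_def gball_def)
qed

lemma sum_epow_le:
  fixes E :: "'v::finite \<Rightarrow> 'v \<Rightarrow> bool"
  assumes r: "0 \<le> r"
    and s: "summable (\<lambda>k. r ^ k * real (Max (range (\<lambda>u. card (gsphere E u k)))))"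
  shows "(\<Sum>q\<in>UNIV. epow r (gdist E u q))
     \<le> (\<Sum>k. r ^ k * real (Max (range (\<lambda>u. card (gsphere E u k)))))"
proof -
  define S where "S = {q. gdist E u q \<noteq> \<infinity>}"
  define g where "g = (\<lambda>q. the_enat (gdist E u q))"
  have "(\<Sum>q\<in>UNIV. epow r (gdist E u q)) = (\<Sum>q\<in>S. epow r (gdist E u q))"
    by (rule sum.mono_neutral_right) (auto simp: S_def epow_def)
  also have "\<dots> = (\<Sum>q\<in>S. r ^ g q)"
    by (rule sum.cong) (auto simp: S_def g_def epow_def)
  also have "\<dots> = (\<Sum>k\<in>g ` S. \<Sum>q\<in>{x\<in>S. g x = k}. r ^ g q)"
    by (rule sum.group[symmetric]) simp_all
  also have "\<dots> = (\<Sum>k\<in>g ` S. r ^ k * real (card (gsphere E u k)))"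
  proof (rule sum.cong)
    fix k assume "k \<in> g ` S"
    have "{x\<in>S. g x = k} = gsphere E u k"
      by (auto simp: gsphere_eq S_def g_def)
    have "(\<Sum>q\<in>{x\<in>S. g x = k}. r ^ g q) = (\<Sum>q\<in>{x\<in>S. g x = k}. r ^ k)"
      by (rule sum.cong) auto
    then show "(\<Sum>q\<in>{x\<in>S. g x = k}. r ^ g q) = r ^ k * real (card (gsphere E u k))"
      using \<open>{x\<in>S. g x = k} = gsphere E u k\<close> by simp
  qed simp
  also have "\<dots> \<le> (\<Sum>k\<in>g ` S. r ^ k * real (Max (range (\<lambda>u. card (gsphere E u k)))))"
  proof (rule sum_mono)
    fix k
    have cm: "card (gsphere E u k) \<le> Max (range (\<lambda>u. card (gsphere E u k)))"
      by (rule Max_ge) simp_all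
    show "r ^ k * real (card (gsphere E u k)) \<le> r ^ k * real (Max (range (\<lambda>u. card (gsphere E u k))))"
      by (rule mult_left_mono[OF of_nat_mono[OF cm] zero_le_power[OF r]])
  qed
  also have "\<dots> \<le> (\<Sum>k. r ^ k * real (Max (range (\<lambda>u. card (gsphere E u k)))))"
    by (rule sum_le_suminf[OF s]) (simp, intro ballI mult_nonneg_nonneg zero_le_power[OF r] of_nat_0_le_iff)
  finally show ?thesis .
qed

lemma main_ind:
  fixes E :: "'v::finite \<Rightarrow> 'v \<Rightarrow> bool"
    and A :: "nat \<Rightarrow> real ^ ('v \<times> 'd::finite) ^ ('v \<times> 'd)"
    and C :: "nat \<Rightarrow> real"
  assumes Cnn: "\<forall>i\<in>set xs. C i \<ge> 0"
    and lam: "0 \<le> lam" "lam < 1"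
    and decay: "\<forall>i\<in>set xs. \<forall>u q. mnorm2 (blk (A i) u q) \<le> C i * epow lam (gdist E u q)"
    and del: "\<delta> > 0" "lam + \<delta> < 1"
    and fin: "summable (\<lambda>k. (lam / (lam + \<delta>)) ^ k * real (Max (range (\<lambda>u. card (gsphere E u k)))))"
  shows "\<forall>u v. mnorm2 (blk (foldr (\<lambda>i M. A i ** M) xs (mat 1)) u v)
           \<le> (\<Sum>k. (lam / (lam + \<delta>)) ^ k * real (Max (range (\<lambda>u. card (gsphere E u k))))) ^ length xs
               * prod_list (map C xs) * epow (lam + \<delta>) (gdist E u v)"
  using Cnn decay
proof (induction xs)
  case Nil
  show ?case
  proof (intro allI)
    fix u v :: 'v
    show "mnorm2 (blk (foldr (\<lambda>i M. A i ** M) [] (mat 1)) u v)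
           \<le> (\<Sum>k. (lam / (lam + \<delta>)) ^ k * real (Max (range (\<lambda>u. card (gsphere E u k))))) ^ length []
               * prod_list (map C []) * epow (lam + \<delta>) (gdist E u v)"
    proof (cases "u = v")
      case True
      have "blk (mat 1) u v = (mat 1 :: real^'d^'d)" using True by (simp add: blk_id)
      moreover have "epow (lam + \<delta>) (gdist E u v) = 1" using True by (simp add: gdist_refl epow_zero)
      ultimately show ?thesis using mnorm2_id by simp
    next
      case False
      have "blk (mat 1) u v = (0 :: real^'d^'d)" using False by (simp add: blk_id)
      moreover have "0 \<le> epow (lam + \<delta>) (gdist E u v)" using del lam by (simp add: epow_nonneg)
      ultimately show ?thesis by (simp add: mnorm2_zero)
    qed
  qed
next
  case (Cons i xs)
  define r where "r = lam / (lam + \<delta>)"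
  define a where "a = (\<Sum>k. r ^ k * real (Max (range (\<lambda>u. card (gsphere E u k)))))"
  define lp where "lp = lam + \<delta>"
  define K where "K = a ^ length xs * prod_list (map C xs)"
  define P where "P = foldr (\<lambda>i M. A i ** M) xs (mat 1)"
  have r0: "0 \<le> r" using lam del by (simp add: r_def)
  have lp: "0 < lp" "lp \<le> 1" using lam del by (auto simp: lp_def)
  have lamr: "lam = r * lp" using lam del by (simp add: r_def lp_def)
  have a0: "0 \<le> a" unfolding a_def
    by (rule suminf_nonneg) (use fin r_def r0 in auto)
  have C0: "0 \<le> prod_list (map C xs)" using Cons.prems(1)
    by (induction xs) auto
  have K0: "0 \<le> K" unfolding K_def using a0 C0 by simp
  have Ci: "0 \<le> C i" using Cons.prems(1) by simp
  have IH: "\<forall>u v. mnorm2 (blk P u v) \<le> K * epow lp (gdist E u v)"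
    using Cons.IH Cons.prems by (simp add: P_def K_def a_def r_def lp_def)
  have dec: "\<forall>u q. mnorm2 (blk (A i) u q) \<le> C i * epow lam (gdist E u q)"
    using Cons.prems by simp
  have sb: "(\<Sum>q\<in>UNIV. epow r (gdist E u q)) \<le> a" for u
    unfolding a_def by (rule sum_epow_le[OF r0]) (use fin r_def in simp)
  show ?case
  proof (intro allI)
    fix u v :: 'v
    have "mnorm2 (blk (A i ** P) u v) \<le> (\<Sum>q\<in>UNIV. mnorm2 (blk (A i) u q ** blk P q v))"
      unfolding blk_mult by (rule mnorm2_sum) simp
    also have "\<dots> \<le> (\<Sum>q\<in>UNIV. (C i * epow lam (gdist E u q)) * (K * epow lp (gdist E q v)))"
    proof (rule sum_mono)
      fix q
      have "mnorm2 (blk (A i) u q ** blk P q v) \<le> mnorm2 (blk (A i) u q) * mnorm2 (blk P q v)"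
        by (rule mnorm2_mult)
      also have "\<dots> \<le> (C i * epow lam (gdist E u q)) * (K * epow lp (gdist E q v))"
        by (intro mult_mono) (use dec IH mnorm2_nonneg Ci lam epow_nonneg in auto)
      finally show "mnorm2 (blk (A i) u q ** blk P q v) \<le> (C i * epow lam (gdist E u q)) * (K * epow lp (gdist E q v))" .
    qed
    also have "\<dots> \<le> (\<Sum>q\<in>UNIV. (C i * K * epow lp (gdist E u v)) * epow r (gdist E u q))"
    proof (rule sum_mono)
      fix q
      have "epow lp (gdist E u q) * epow lp (gdist E q v) \<le> epow lp (gdist E u v)"
        unfolding epow_add[symmetric] by (rule epow_anti) (use lp gdist_tri in auto)
      then have "epow r (gdist E u q) * (epow lp (gdist E u q) * epow lp (gdist E q v))
          \<le> epow r (gdist E u q) * epow lp (gdist E u v)"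
        by (rule mult_left_mono) (rule epow_nonneg[OF r0])
      then have "epow lam (gdist E u q) * epow lp (gdist E q v) \<le> epow lp (gdist E u v) * epow r (gdist E u q)"
        unfolding lamr epow_mult by (simp add: algebra_simps)
      then have "(C i * K) * (epow lam (gdist E u q) * epow lp (gdist E q v)) \<le> (C i * K) * (epow lp (gdist E u v) * epow r (gdist E u q))"
        by (rule mult_left_mono) (use Ci K0 in simp)
      then show "(C i * epow lam (gdist E u q)) * (K * epow lp (gdist E q v)) \<le> (C i * K * epow lp (gdist E u v)) * epow r (gdist E u q)"
        by (simp add: algebra_simps)
    qed
    also have "\<dots> = (C i * K * epow lp (gdist E u v)) * (\<Sum>q\<in>UNIV. epow r (gdist E u q))"
      by (simp add: sum_distrib_left)
    also have "\<dots> \<le> (C i * K * epow lp (gdist E u v)) * a"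
      by (rule mult_left_mono[OF sb]) (use Ci K0 epow_nonneg lp in simp)
    also have "\<dots> = a ^ length (i # xs) * prod_list (map C (i # xs)) * epow lp (gdist E u v)"
      by (simp add: K_def algebra_simps)
    finally show "mnorm2 (blk (foldr (\<lambda>i M. A i ** M) (i # xs) (mat 1)) u v)
           \<le> (\<Sum>k. (lam / (lam + \<delta>)) ^ k * real (Max (range (\<lambda>u. card (gsphere E u k))))) ^ length (i # xs)
               * prod_list (map C (i # xs)) * epow (lam + \<delta>) (gdist E u v)"
      by (simp add: P_def a_def r_def lp_def)
  qed
qed

theorem lemmaC3:
  fixes E :: "'v::finite \<Rightarrow> 'v \<Rightarrow> bool"
    and A :: "nat \<Rightarrow> real ^ ('v \<times> 'd::finite) ^ ('v \<times> 'd)"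
    and C :: "nat \<Rightarrow> real"
    and L :: nat and lam \<delta> :: real
  assumes sym: "symp E"
    and l1: "L \<ge> 1"
    and Cnn: "\<forall>i\<in>{1..L}. C i \<ge> 0"
    and lam: "0 \<le> lam" "lam < 1"
    and decay: "\<forall>i\<in>{1..L}. \<forall>u q. mnorm2 (blk (A i) u q) \<le> C i * epow lam (gdist E u q)"
    and del: "\<delta> > 0" "lam + \<delta> < 1"
    and fin: "summable (\<lambda>k. (lam / (lam + \<delta>)) ^ k * real (Max (range (\<lambda>u. card (gsphere E u k)))))"
  shows "\<forall>u v. mnorm2 (blk (foldr (\<lambda>i M. A i ** M) [1..<L+1] (mat 1)) u v)
           \<le> ((\<Sum>k. (lam / (lam + \<delta>)) ^ k * real (Max (range (\<lambda>u. card (gsphere E u k))))) ^ L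
               * (\<Prod>i=1..L. C i)) * epow (lam + \<delta>) (gdist E u v)"
proof -
  have s: "set [1..<L+1] = {1..L}" by auto
  have p0: "prod C (set [1..<L+1]) = prod_list (map C [1..<L+1])"
    by (rule prod.distinct_set_conv_list) simp
  have p: "prod_list (map C [1..<L+1]) = (\<Prod>i=1..L. C i)"
    using p0 unfolding s by simp
  have len: "length [1..<L+1] = L" by simp
  note m = main_ind[of "[1..<L+1]" C lam A E \<delta>]
  show ?thesis
    using m[unfolded s p len, OF Cnn lam decay del fin] .
qed

end
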